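(* For every integer $n\ge 0$, \[ (x+1)\sum_{k=0}^{n}\binom{n}{k}\,{}_{H}w_{n-k}(x)\,w_{k}(x)={}_{H}w_{n+1}(x)+{}_{H}w_{n}(x)-w_{n+1}(x). \]
   Context: $\genfrac{\{}{\}}{0pt}{}{n}{k}$ denotes the Stirling numbers of the second kind. The geometric polynomials are $w_n(x)=\sum_{k=0}^{n}\genfrac{\{}{\}}{0pt}{}{n}{k}k!\,x^k$ (so $w_0=1$). With $H_k=\sum_{i=1}^k 1/i$, the harmonic geometric polynomials are ${}_{H}w_n(x)=\sum_{k=1}^{n}\genfrac{\{}{\}}{0pt}{}{n}{k}k!\,H_k\,x^k$ (so ${}_Hw_0=0$). *)

theory Defs
  imports "HOL-Analysis.Analysis" "HOL-Combinatorics.Stirling"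
begin

definition geom_poly :: "nat \<Rightarrow> real \<Rightarrow> real" where
  "geom_poly n x = (\<Sum>k=0..n. real (Stirling n k) * fact k * x ^ k)"

definition harm_geom_poly :: "nat \<Rightarrow> real \<Rightarrow> real" where
  "harm_geom_poly n x = (\<Sum>k=1..n. real (Stirling n k) * fact k * harm k * x ^ k)"

end

theory Submission
  imports Defs
begin

definition aa :: "nat \<Rightarrow> nat \<Rightarrow> real" where
  "aa n k = real (Stirling n k) * fact k"

lemma aa_Suc: "aa (Suc n) k = real k * (aa n k + aa n (k - 1))"
proof (cases k)
  case 0 then show ?thesis by (simp add: aa_def)
next
  case (Suc j)
  then show ?thesis by (simp add: aa_def algebra_simps)
qed

lemma aa_less: "n < k \<Longrightarrow> aa n k = 0"
  by (simp add: aa_def)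

lemma leibniz:
  fixes F G :: "nat \<Rightarrow> real"
  shows "(\<Sum>k\<le>Suc n. real (Suc n choose k) * F (Suc n - k) * G k)
       = (\<Sum>k\<le>n. real (n choose k) * (F (Suc (n - k)) * G k + F (n - k) * G (Suc k)))"
proof -
  define H where "H k = F (Suc n - k) * G k" for k
  have "(\<Sum>k\<le>Suc n. real (Suc n choose k) * F (Suc n - k) * G k)
      = (\<Sum>k\<le>Suc n. real (Suc n choose k) * H k)" by (simp add: H_def mult.assoc)
  also have "\<dots> = H 0 + (\<Sum>k\<le>n. real (Suc n choose Suc k) * H (Suc k))"
    by (subst sum.atMost_Suc_shift) simp
  also have "\<dots> = H 0 + (\<Sum>k\<le>n. real (n choose Suc k) * H (Suc k)) + (\<Sum>k\<le>n. real (n choose k) * H (Suc k))"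
    by (simp add: sum.distrib algebra_simps)
  also have "H 0 + (\<Sum>k\<le>n. real (n choose Suc k) * H (Suc k)) = (\<Sum>k\<le>Suc n. real (n choose k) * H k)"
    by (subst sum.atMost_Suc_shift) simp
  also have "\<dots> = (\<Sum>k\<le>n. real (n choose k) * H k)" by simp
  finally show ?thesis
    by (simp add: H_def sum.distrib algebra_simps Suc_diff_le)
qed

lemma conv: "(\<Sum>k\<le>n. real (n choose k) * aa (n - k) i * aa k j) = aa n (i + j)"
proof (induction n arbitrary: i j)
  case 0
  then show ?case by (cases i; cases j) (simp_all add: aa_def)
next
  case (Suc n)
  have "(\<Sum>k\<le>Suc n. real (Suc n choose k) * aa (Suc n - k) i * aa k j)
     = (\<Sum>k\<le>n. real (n choose k) * (aa (Suc (n - k)) i * aa k j + aa (n - k) i * aa (Suc k) j))"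
    using leibniz[where F="\<lambda>m. aa m i" and G="\<lambda>k. aa k j" and n=n] by simp
  also have "\<dots> = real i * ((\<Sum>k\<le>n. real (n choose k) * aa (n - k) i * aa k j)
        + (\<Sum>k\<le>n. real (n choose k) * aa (n - k) (i - 1) * aa k j))
      + real j * ((\<Sum>k\<le>n. real (n choose k) * aa (n - k) i * aa k j)
        + (\<Sum>k\<le>n. real (n choose k) * aa (n - k) i * aa k (j - 1)))"
    by (simp add: aa_Suc sum.distrib sum_distrib_left algebra_simps)
  also have "\<dots> = real i * (aa n (i + j) + aa n (i - 1 + j)) + real j * (aa n (i + j) + aa n (i + (j - 1)))"
    by (simp add: Suc.IH)
  also have "\<dots> = aa (Suc n) (i + j)"
    by (cases i; cases j) (simp_all add: aa_Suc algebra_simps)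
  finally show ?case .
qed

lemma sum_harm: "(\<Sum>i\<le>m. harm i :: real) = real (Suc m) * harm m - real m"
proof (induction m)
  case 0
  then show ?case by (simp add: harm_def)
next
  case (Suc m)
  have "(\<Sum>i\<le>Suc m. harm i :: real) = real (Suc m) * harm m - real m + (harm m + inverse (real (Suc m)))"
    using Suc.IH by (simp add: harm_Suc)
  also have "\<dots> = real (Suc (Suc m)) * harm (Suc m) - real (Suc m)"
    by (simp add: harm_Suc field_simps)
  finally show ?case .
qed

lemma ext_sum: "m \<le> n \<Longrightarrow> (\<Sum>i\<le>m. aa m i * f i) = (\<Sum>i\<le>n. aa m i * (f i :: real))"
  by (rule sum.mono_neutral_left) (auto simp: aa_less)

lemma hgp_alt: "harm_geom_poly n x = (\<Sum>i\<le>n. aa n i * (harm i * x ^ i))"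
proof -
  have "harm_geom_poly n x = (\<Sum>i=1..n. aa n i * (harm i * x ^ i))"
    unfolding harm_geom_poly_def aa_def by (simp add: mult.assoc)
  also have "\<dots> = (\<Sum>i=0..n. aa n i * (harm i * x ^ i))"
    by (rule sum.mono_neutral_left) (auto simp: harm_def)
  finally show ?thesis by (simp add: atLeast0AtMost)
qed

lemma gp_alt: "geom_poly n x = (\<Sum>i\<le>n. aa n i * x ^ i)"
  unfolding geom_poly_def aa_def by (simp add: atLeast0AtMost mult.assoc)

lemma conv_poly:
  "(\<Sum>k=0..n. real (n choose k) * harm_geom_poly (n - k) x * geom_poly k x)
   = (\<Sum>m\<le>n. (real (Suc m) * harm m - real m) * aa n m * x ^ m)"
proof -
  have "(\<Sum>k=0..n. real (n choose k) * harm_geom_poly (n - k) x * geom_poly k x)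
     = (\<Sum>k\<le>n. real (n choose k) * (\<Sum>i\<le>n. aa (n - k) i * (harm i * x ^ i)) * (\<Sum>j\<le>n. aa k j * x ^ j))"
    unfolding atLeast0AtMost
    by (rule sum.cong[OF refl]) (simp add: hgp_alt gp_alt ext_sum[where n=n])
  also have "\<dots> = (\<Sum>k\<le>n. \<Sum>i\<le>n. \<Sum>j\<le>n. real (n choose k) * aa (n - k) i * aa k j * (harm i * x ^ (i + j)))"
    by (simp add: sum_product sum_distrib_left power_add algebra_simps)
  also have "\<dots> = (\<Sum>i\<le>n. \<Sum>j\<le>n. (\<Sum>k\<le>n. real (n choose k) * aa (n - k) i * aa k j) * (harm i * x ^ (i + j)))"
  proof -
    have "(\<Sum>k\<le>n. \<Sum>i\<le>n. \<Sum>j\<le>n. real (n choose k) * aa (n - k) i * aa k j * (harm i * x ^ (i + j)))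
        = (\<Sum>i\<le>n. \<Sum>k\<le>n. \<Sum>j\<le>n. real (n choose k) * aa (n - k) i * aa k j * (harm i * x ^ (i + j)))"
      by (rule sum.swap)
    also have "\<dots> = (\<Sum>i\<le>n. \<Sum>j\<le>n. \<Sum>k\<le>n. real (n choose k) * aa (n - k) i * aa k j * (harm i * x ^ (i + j)))"
      by (rule sum.cong[OF refl], rule sum.swap)
    also have "\<dots> = (\<Sum>i\<le>n. \<Sum>j\<le>n. (\<Sum>k\<le>n. real (n choose k) * aa (n - k) i * aa k j) * (harm i * x ^ (i + j)))"
      by (simp only: sum_distrib_right)
    finally show ?thesis .
  qed
  also have "\<dots> = (\<Sum>i\<le>n. \<Sum>j\<le>n. aa n (i + j) * (harm i * x ^ (i + j)))"
    by (simp add: conv)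
  also have "\<dots> = (\<Sum>(i,j)\<in>{..n} \<times> {..n}. aa n (i + j) * (harm i * x ^ (i + j)))"
    by (simp add: sum.cartesian_product)
  also have "\<dots> = (\<Sum>(i,j)\<in>{(i,j). i + j \<le> n}. aa n (i + j) * (harm i * x ^ (i + j)))"
    by (rule sum.mono_neutral_right) (auto, metis aa_less leI)
  also have "\<dots> = (\<Sum>m\<le>n. \<Sum>i\<le>m. aa n m * (harm i * x ^ m))"
  proof -
    have "(\<Sum>(i,j)\<in>{(i,j). i + j \<le> n}. aa n (i + j) * (harm i * x ^ (i + j)))
        = (\<Sum>m\<le>n. \<Sum>i\<le>m. aa n (i + (m - i)) * (harm i * x ^ (i + (m - i))))"
      by (rule sum.triangle_reindex_eq)
    also have "\<dots> = (\<Sum>m\<le>n. \<Sum>i\<le>m. aa n m * (harm i * x ^ m))"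
      by (rule sum.cong[OF refl], rule sum.cong[OF refl]) simp
    finally show ?thesis .
  qed
  also have "\<dots> = (\<Sum>m\<le>n. (real (Suc m) * harm m - real m) * aa n m * x ^ m)"
    by (rule sum.cong[OF refl]) (simp add: sum_distrib_left[symmetric] sum_distrib_right[symmetric] sum_harm)
  finally show ?thesis .
qed

theorem lemma1:
  fixes n :: nat and x :: real
  shows "(x + 1) * (\<Sum>k=0..n. real (n choose k) * harm_geom_poly (n - k) x * geom_poly k x)
         = harm_geom_poly (Suc n) x + harm_geom_poly n x - geom_poly (Suc n) x"
proof -
  define c where "c m = real (Suc m) * harm m - real m" for m
  have z: "aa n (Suc n) = 0" by (simp add: aa_less)
  have "harm_geom_poly (Suc n) x + harm_geom_poly n x - geom_poly (Suc n) x
     = (\<Sum>k\<le>Suc n. (real k * (harm k - 1) + harm k) * aa n k * x ^ k)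
       + (\<Sum>k\<le>Suc n. real k * (harm k - 1) * aa n (k - 1) * x ^ k)"
    by (simp add: z hgp_alt gp_alt aa_Suc sum_subtractf[symmetric] sum.distrib[symmetric] algebra_simps)
  also have "(\<Sum>k\<le>Suc n. (real k * (harm k - 1) + harm k) * aa n k * x ^ k)
       = (\<Sum>k\<le>n. c k * aa n k * x ^ k)"
    by (simp add: z c_def algebra_simps)
  also have "(\<Sum>k\<le>Suc n. real k * (harm k - 1) * aa n (k - 1) * x ^ k)
       = (\<Sum>k\<le>n. c k * aa n k * x ^ k * x)"
  proof -
    have "(\<Sum>k\<le>Suc n. real k * (harm k - 1) * aa n (k - 1) * x ^ k)
       = real 0 * (harm 0 - 1) * aa n (0 - 1) * x ^ 0 + (\<Sum>k\<le>n. real (Suc k) * (harm (Suc k) - 1) * aa n (Suc k - 1) * x ^ Suc k)"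
      by (rule sum.atMost_Suc_shift)
    also have "\<dots> = (\<Sum>k\<le>n. c k * aa n k * x ^ k * x)"
      by (simp only: of_nat_0 mult_zero_left mult_zero_right add_0, rule sum.cong[OF refl])
         (simp add: c_def harm_Suc field_simps)
    finally show ?thesis .
  qed
  finally have R: "harm_geom_poly (Suc n) x + harm_geom_poly n x - geom_poly (Suc n) x
     = (\<Sum>k\<le>n. c k * aa n k * x ^ k) + (\<Sum>k\<le>n. c k * aa n k * x ^ k * x)" .
  have cp: "(\<Sum>k=0..n. real (n choose k) * harm_geom_poly (n - k) x * geom_poly k x)
     = (\<Sum>k\<le>n. c k * aa n k * x ^ k)"
    unfolding conv_poly c_def ..
  show ?thesis
    unfolding R cp by (simp add: sum_distrib_left sum_distrib_right sum.distrib algebra_simps)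
qed

end
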